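(* Let $k>v_1$ and let $\varphi=(x(t),y(t))$ be the $k$-jet of an element of $\Sigma_\Gamma$. For $b\ne0$, the vector $(0,bt^k)$ belongs to $T_1$ (resp. $\widetilde T$) if and only if $k+v_0\in\Lambda^2_\varphi$ (resp. $k+v_0\in\Lambda'_\varphi$).
   Context: $\mathcal O_1=\mathbb C\{t\}$, $\mathcal O_2=\mathbb C\{X,Y\}$, with maximal ideals $\mathcal M_1,\mathcal M_2$; $\varphi^*(h)=h(x(t),y(t))$; $j^k$ denotes truncation modulo $t^{k+1}$, componentwise. $\Gamma$ is the semigroup of values of a plane branch with minimal generators $v_0<v_1<\cdots<v_g$ and conductor $c$; $\Sigma_\Gamma$ is the set of Puiseux parametrizations $(t^{v_0},t^{v_1}+\sum_{v_1<i<c}a_it^i)$ (primitive, $v_0\nmid v_1$) whose semigroup of values equals $\Gamma$. $T_1=\{j^k(x'\epsilon+\varphi^*(g),\ y'\epsilon+\varphi^*(h)):\epsilon\in\mathcal M_1^2,\ g,h\in\mathcal M_2^2\}$ and $\widetilde T$ is defined the same way but with $g\in\langle X^2,Y\rangle$, $h\in\mathcal M_2^2$ (tangent spaces to the $\mathcal A_1^k$- and $\widetilde{\mathcal A}^k$-orbits). For $\omega=h\,dX+g\,dY$ put $v_\varphi(\omega)=\mathrm{ord}_t(\varphi^*(h)x'(t)+\varphi^*(g)y'(t))+1$; $\Lambda^2_\varphi=\{v_\varphi(h\,dX+g\,dY): g,h\in\mathcal M_2^2\}$ and $\Lambda'_\varphi=\{v_\varphi(h\,dX+g\,dY): g\in\langle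 X^2,Y\rangle,\ h\in\mathcal M_2^2\}$ (only forms with nonzero pull-back considered). *)

theory Defs
  imports "HOL-Computational_Algebra.Formal_Power_Series"
begin

text \<open>C{t}: convergent power series in one variable, modelled as complex fps with
  geometric coefficient bounds.\<close>
definition conv1 :: "complex fps \<Rightarrow> bool" where
  "conv1 f \<longleftrightarrow> (\<exists>r>0. \<exists>M. \<forall>n. norm (fps_nth f n) * (r::real) ^ n \<le> M)"

text \<open>C{X,Y}: convergent power series in two variables, given by their coefficients
  h i j (coefficient of X^i Y^j).\<close>
type_synonym series2 = "nat \<Rightarrow> nat \<Rightarrow> complex"

definition conv2 :: "series2 \<Rightarrow> bool" where
  "conv2 h \<longleftrightarrow> (\<exists>r>0. \<exists>M. \<forall>i j. norm (h i j) * (r::real) ^ (i + j) \<le> M)"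

definition M1sq :: "complex fps set" where
  "M1sq = {e. conv1 e \<and> fps_nth e 0 = 0 \<and> fps_nth e 1 = 0}"

definition M2sq :: "series2 set" where
  "M2sq = {h. conv2 h \<and> h 0 0 = 0 \<and> h 1 0 = 0 \<and> h 0 1 = 0}"

text \<open>The ideal generated by X^2 and Y in C{X,Y}: no constant term, no X term.\<close>
definition IdX2Y :: "series2 set" where
  "IdX2Y = {h. conv2 h \<and> h 0 0 = 0 \<and> h 1 0 = 0}"

type_synonym param = "complex fps \<times> complex fps"

text \<open>Pull-back phi^*(h) = h(x(t),y(t)), for x(0)=y(0)=0 (then x^i y^j has order \<ge> i+j,
  so only finitely many terms contribute to each coefficient).\<close>
definition pull :: "param \<Rightarrow> series2 \<Rightarrow> complex fps" where
  "pull \<phi> h = Abs_fps (\<lambda>n. \<Sum>i\<le>n. \<Sum>j\<le>n. h i j * fps_nth (fst \<phi> ^ i * snd \<phi> ^ j) n)"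

definition semigroup_of :: "param \<Rightarrow> nat set" where
  "semigroup_of \<phi> = {subdegree (pull \<phi> h) | h. conv2 h \<and> pull \<phi> h \<noteq> 0}"

definition sg_v0 :: "nat set \<Rightarrow> nat" where
  "sg_v0 G = (LEAST n. n \<in> G \<and> 0 < n)"

definition sg_v1 :: "nat set \<Rightarrow> nat" where
  "sg_v1 G = (LEAST n. n \<in> G \<and> \<not> sg_v0 G dvd n)"

definition conductor :: "nat set \<Rightarrow> nat" where
  "conductor G = (LEAST c. \<forall>n\<ge>c. n \<in> G)"

definition primitive :: "param \<Rightarrow> bool" where
  "primitive \<phi> \<longleftrightarrow> Gcd ({n. fps_nth (fst \<phi>) n \<noteq> 0} \<union> {n. fps_nth (snd \<phi>) n \<noteq> 0}) = (1::nat)"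

definition Sigma :: "nat set \<Rightarrow> param set" where
  "Sigma G = {\<phi>. \<exists>a :: nat \<Rightarrow> complex.
      \<phi> = (fps_X ^ sg_v0 G,
           fps_X ^ sg_v1 G + (\<Sum>i\<in>{sg_v1 G<..<conductor G}. fps_const (a i) * fps_X ^ i))
      \<and> primitive \<phi> \<and> \<not> sg_v0 G dvd sg_v1 G \<and> semigroup_of \<phi> = G}"

definition jet :: "nat \<Rightarrow> complex fps \<Rightarrow> complex fps" where
  "jet k f = Abs_fps (\<lambda>n. if n \<le> k then fps_nth f n else 0)"

definition jet_pair :: "nat \<Rightarrow> param \<Rightarrow> param" where
  "jet_pair k \<phi> = (jet k (fst \<phi>), jet k (snd \<phi>))"

definition T1 :: "nat \<Rightarrow> param \<Rightarrow> param set" where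
  "T1 k \<phi> = {(jet k (fps_deriv (fst \<phi>) * e + pull \<phi> g), jet k (fps_deriv (snd \<phi>) * e + pull \<phi> h))
     | e g h. e \<in> M1sq \<and> g \<in> M2sq \<and> h \<in> M2sq}"

definition Ttilde :: "nat \<Rightarrow> param \<Rightarrow> param set" where
  "Ttilde k \<phi> = {(jet k (fps_deriv (fst \<phi>) * e + pull \<phi> g), jet k (fps_deriv (snd \<phi>) * e + pull \<phi> h))
     | e g h. e \<in> M1sq \<and> g \<in> IdX2Y \<and> h \<in> M2sq}"

text \<open>Pull-back of the 1-form h dX + g dY (up to the factor dt), and its value.\<close>
definition form_pull :: "param \<Rightarrow> series2 \<Rightarrow> series2 \<Rightarrow> complex fps" where
  "form_pull \<phi> h g = pull \<phi> h * fps_deriv (fst \<phi>) + pull \<phi> g * fps_deriv (snd \<phi>)"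

definition vform :: "param \<Rightarrow> series2 \<Rightarrow> series2 \<Rightarrow> nat" where
  "vform \<phi> h g = subdegree (form_pull \<phi> h g) + 1"

definition Lambda2 :: "param \<Rightarrow> nat set" where
  "Lambda2 \<phi> = {vform \<phi> h g | h g. g \<in> M2sq \<and> h \<in> M2sq \<and> form_pull \<phi> h g \<noteq> 0}"

definition LambdaP :: "param \<Rightarrow> nat set" where
  "LambdaP \<phi> = {vform \<phi> h g | h g. g \<in> IdX2Y \<and> h \<in> M2sq \<and> form_pull \<phi> h g \<noteq> 0}"

end

theory Submission
  imports Defs
begin

unbundle fps_syntax

definition zb :: "nat \<Rightarrow> complex fps \<Rightarrow> bool" where
  "zb m f \<longleftrightarrow> (\<forall>i<m. f $ i = 0)"

lemma zb_mult:
  assumes "zb a f" "zb b g" shows "zb (a+b) (f*g)"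
  unfolding zb_def
proof (intro allI impI)
  fix n assume n: "n < a + b"
  have "(\<Sum>i=0..n. f$i * g$(n - i)) = 0"
  proof (rule sum.neutral, intro ballI)
    fix i assume i: "i \<in> {0..n}"
    show "f$i * g$(n - i) = 0"
    proof (cases "i < a")
      case True then show ?thesis using assms(1) by (simp add: zb_def)
    next
      case False then have "n - i < b" using n i by auto
      then show ?thesis using assms(2) by (simp add: zb_def)
    qed
  qed
  then show "(f*g) $ n = 0" by (simp add: fps_mult_nth)
qed

lemma zb_mult_nth:
  assumes "zb a f" "zb b g" shows "(f*g) $ (a+b) = f$a * g$b"
proof -
  have "(\<Sum>i=0..a+b. f$i * g$(a + b - i)) = f$a * g$(a+b-a)"
  proof -
    have "(\<Sum>i\<in>{0..a+b} - {a}. f$i * g$(a + b - i)) = 0"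
    proof (rule sum.neutral, intro ballI)
      fix i assume i: "i \<in> {0..a+b} - {a}"
      show "f$i * g$(a + b - i) = 0"
      proof (cases "i < a")
        case True then show ?thesis using assms(1) by (simp add: zb_def)
      next
        case False then have "a + b - i < b" using i by auto
        then show ?thesis using assms(2) by (simp add: zb_def)
      qed
    qed
    moreover have "(\<Sum>i=0..a+b. f$i * g$(a + b - i)) = f$a * g$(a+b-a) + (\<Sum>i\<in>{0..a+b} - {a}. f$i * g$(a + b - i))"
      by (rule sum.remove) auto
    ultimately show ?thesis by simp
  qed
  then show ?thesis by (simp add: fps_mult_nth)
qed

lemma zb_mono: "zb m f \<Longrightarrow> n \<le> m \<Longrightarrow> zb n f"
  by (auto simp: zb_def)

lemma zb_power: "zb m f \<Longrightarrow> zb (m * j) (f ^ j)"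
proof (induction j)
  case 0 then show ?case by (simp add: zb_def)
next
  case (Suc j)
  have "zb (m + m*j) (f * f^j)" by (rule zb_mult) (use Suc in auto)
  then show ?case by (simp add: algebra_simps)
qed

lemma jet_nth: "jet k f $ n = (if n \<le> k then f $ n else 0)"
  unfolding jet_def by simp

lemma mult_jet_nth: "n \<le> k \<Longrightarrow> (f * jet k g) $ n = (f * g) $ n"
  by (auto simp: fps_mult_nth jet_nth intro!: sum.cong)

lemma pull_scale: "pull \<phi> (\<lambda>i j. a * g i j) = fps_const a * pull \<phi> g"
  unfolding pull_def by (rule fps_ext) (simp add: sum_distrib_left mult.assoc)

lemma conv2_scale: "conv2 g \<Longrightarrow> conv2 (\<lambda>i j. a * g i j)"
  unfolding conv2_def
proof (elim exE conjE)
  fix r M assume r: "(0::real) < r" and M: "\<forall>i j. norm (g i j) * r ^ (i + j) \<le> M"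
  show "\<exists>r>0. \<exists>M. \<forall>i j. norm (a * g i j) * (r::real) ^ (i + j) \<le> M"
  proof (intro exI conjI allI)
    show "0 < r" by fact
    fix i j
    have "norm (a * g i j) * r ^ (i + j) = norm a * (norm (g i j) * r ^ (i + j))"
      by (simp add: norm_mult)
    also have "\<dots> \<le> norm a * M" using M by (intro mult_left_mono) auto
    finally show "norm (a * g i j) * r ^ (i + j) \<le> norm a * M" .
  qed
qed

lemma M2sq_scale: "g \<in> M2sq \<Longrightarrow> (\<lambda>i j. a * g i j) \<in> M2sq"
  unfolding M2sq_def by (auto intro: conv2_scale)

lemma IdX2Y_scale: "g \<in> IdX2Y \<Longrightarrow> (\<lambda>i j. a * g i j) \<in> IdX2Y"
  unfolding IdX2Y_def by (auto intro: conv2_scale)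

lemma conv1_jet: "conv1 (jet k f)"
  unfolding conv1_def
proof (intro exI conjI allI)
  show "(0::real) < 1" by simp
  fix n
  show "norm (jet k f $ n) * (1::real) ^ n \<le> (\<Sum>m\<le>k. norm (f $ m))"
  proof (cases "n \<le> k")
    case True
    then have "norm (f $ n) \<le> (\<Sum>m\<le>k. norm (f $ m))"
      by (intro member_le_sum) auto
    then show ?thesis using True by (simp add: jet_nth)
  next
    case False then show ?thesis by (simp add: jet_nth sum_nonneg)
  qed
qed

lemma pull_zb:
  assumes x: "fst \<phi> = fps_X ^ v0" and v0: "v0 \<ge> 1" and y: "zb (v0+1) (snd \<phi>)"
    and g: "g 0 0 = 0" "g 1 0 = 0"
  shows "zb (v0+1) (pull \<phi> g)"
  unfolding zb_def
proof (intro allI impI)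
  fix n assume n: "n < v0 + 1"
  have hz: "\<And>i j. g i j * (fst \<phi> ^ i * snd \<phi> ^ j) $ n = 0"
  proof -
    fix i j
    show "g i j * (fst \<phi> ^ i * snd \<phi> ^ j) $ n = 0"
    proof (cases "(i = 0 \<and> j = 0) \<or> (i = 1 \<and> j = 0)")
      case True then show ?thesis using g by auto
    next
      case False
      have zx: "zb v0 (fst \<phi>)" using x by (simp add: zb_def)
      have "zb (v0*i + (v0+1)*j) (fst \<phi> ^ i * snd \<phi> ^ j)"
        by (intro zb_mult zb_power zx y)
      moreover have "v0 + 1 \<le> v0*i + (v0+1)*j"
      proof (cases "j = 0")
        case True
        with False have "i \<ge> 2" by auto
        then have a: "v0 * 2 \<le> v0 * i" by (intro mult_left_mono) auto
        have b: "(v0+1)*j = 0" using True by simp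
        show ?thesis using a b v0 by linarith
      next
        case False
        then have "(v0+1) * 1 \<le> (v0+1)*j" by (intro mult_left_mono) auto
        then show ?thesis by auto
      qed
      ultimately have "(fst \<phi> ^ i * snd \<phi> ^ j) $ n = 0" using n by (auto simp: zb_def)
      then show ?thesis by simp
    qed
  qed
  show "pull \<phi> g $ n = 0" unfolding pull_def by (simp only: fps_nth_Abs_fps hz sum.neutral_const)
qed

lemma xprime:
  assumes x: "fst \<phi> = fps_X ^ v0" and v0: "v0 \<ge> 1"
  shows "zb (v0-1) (fps_deriv (fst \<phi>))" "fps_deriv (fst \<phi>) $ (v0-1) = of_nat v0"
    "fps_deriv (fst \<phi>) = fps_X ^ (v0-1) * fps_const (of_nat v0)"
proof -
  show "zb (v0-1) (fps_deriv (fst \<phi>))" using x v0 by (auto simp: zb_def)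
  show "fps_deriv (fst \<phi>) $ (v0-1) = of_nat v0" using x v0 by auto
  show "fps_deriv (fst \<phi>) = fps_X ^ (v0-1) * fps_const (of_nat v0)"
    by (rule fps_ext) (use x v0 in \<open>auto simp: fps_X_power_mult_nth\<close>)
qed

lemma yprime:
  assumes y: "zb (v0+1) (snd \<phi>)"
  shows "zb v0 (fps_deriv (snd \<phi>))"
  using y by (auto simp: zb_def)

lemma fwd:
  assumes x: "fst \<phi> = fps_X ^ v0" and v0: "v0 \<ge> 1" and y: "zb (v0+1) (snd \<phi>)"
    and b: "b \<noteq> 0"
    and eq1: "jet k (fps_deriv (fst \<phi>) * e + pull \<phi> g) = 0"
    and eq2: "jet k (fps_deriv (snd \<phi>) * e + pull \<phi> h) = fps_const b * fps_X ^ k"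
  shows "form_pull \<phi> (\<lambda>i j. (-1) * h i j) g \<noteq> 0 \<and> vform \<phi> (\<lambda>i j. (-1) * h i j) g = k + v0"
proof -
  define x' where "x' = fps_deriv (fst \<phi>)"
  define y' where "y' = fps_deriv (snd \<phi>)"
  define A where "A = x' * e + pull \<phi> g"
  define B where "B = y' * e + pull \<phi> h"
  define F where "F = form_pull \<phi> (\<lambda>i j. (-1) * h i j) g"
  have zA: "zb (k+1) A" unfolding zb_def
  proof (intro allI impI)
    fix n assume "n < k+1"
    then have "jet k A $ n = A $ n" by (simp add: jet_nth)
    then show "A $ n = 0" using eq1 by (simp add: A_def x'_def)
  qed
  have Bn: "B $ n = (if n = k then b else 0)" if "n \<le> k" for n
  proof -
    have "jet k B $ n = B $ n" using that by (simp add: jet_nth)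
    then have "B $ n = b * (if n = k then 1 else 0)" using eq2 by (simp add: B_def y'_def)
    then show ?thesis by simp
  qed
  have zB: "zb k B" using Bn by (auto simp: zb_def)
  have Bk: "B $ k = b" using Bn by simp
  have zx: "zb (v0-1) x'" and xv: "x' $ (v0-1) = of_nat v0"
    using xprime[OF x v0] by (auto simp: x'_def)
  have zy: "zb v0 y'" using yprime[OF y] by (simp add: y'_def)
  have m1: "fps_const (-1::complex) = -1" by (metis fps_const_1_eq_1 fps_const_neg)
  have FA: "F = y' * A - x' * B"
    using m1 unfolding F_def form_pull_def A_def B_def x'_def y'_def pull_scale
    by (simp add: algebra_simps)
  have z1: "zb (v0 + (k+1)) (y' * A)" by (rule zb_mult[OF zy zA])
  have z2: "zb (v0 - 1 + k) (x' * B)" by (rule zb_mult[OF zx zB])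
  have n2: "(x' * B) $ (v0 - 1 + k) = of_nat v0 * b" using zb_mult_nth[OF zx zB] xv Bk by simp
  have Fd: "F $ (v0 - 1 + k) \<noteq> 0"
  proof -
    have "(y' * A) $ (v0 - 1 + k) = 0" using z1 v0 by (auto simp: zb_def)
    then have "F $ (v0 - 1 + k) = - (of_nat v0 * b)" using n2 FA by simp
    then show ?thesis using v0 b by simp
  qed
  have Fl: "F $ i = 0" if "i < v0 - 1 + k" for i
  proof -
    have "(y' * A) $ i = 0" using z1 that by (auto simp: zb_def)
    moreover have "(x' * B) $ i = 0" using z2 that by (auto simp: zb_def)
    ultimately show ?thesis using FA by simp
  qed
  have "subdegree F = v0 - 1 + k" by (rule subdegreeI[OF Fd Fl])
  moreover have "F \<noteq> 0" using Fd by auto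
  ultimately show ?thesis using v0 unfolding vform_def F_def[symmetric] by simp
qed

lemma bwd:
  assumes x: "fst \<phi> = fps_X ^ v0" and v0: "v0 \<ge> 1" and y: "zb (v0+1) (snd \<phi>)"
    and g: "g 0 0 = 0" "g 1 0 = 0"
    and Fnz: "form_pull \<phi> h g \<noteq> 0" and vf: "vform \<phi> h g = k + v0"
  shows "\<exists>l e. e \<in> M1sq \<and> jet k (fps_deriv (fst \<phi>) * e + pull \<phi> (\<lambda>i j. l * g i j)) = 0
     \<and> jet k (fps_deriv (snd \<phi>) * e + pull \<phi> (\<lambda>i j. (-l) * h i j)) = fps_const b * fps_X ^ k"
proof -
  define x' where "x' = fps_deriv (fst \<phi>)"
  define y' where "y' = fps_deriv (snd \<phi>)"
  define F where "F = form_pull \<phi> h g"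
  define P where "P = pull \<phi> g"
  define d where "d = v0 - 1 + k"
  have sd: "subdegree F = d" using vf v0 unfolding vform_def F_def[symmetric] d_def by simp
  define c where "c = F $ d"
  have c: "c \<noteq> 0" using Fnz sd unfolding c_def F_def by (metis nth_subdegree_nonzero)
  have Fl: "F $ i = 0" if "i < d" for i using that sd by auto
  have zP: "zb (v0+1) P" unfolding P_def by (rule pull_zb[where g=g, OF x v0 y g])
  have v0c: "(of_nat v0 :: complex) \<noteq> 0" using v0 by simp
  have xd: "x' = fps_X ^ (v0-1) * fps_const (of_nat v0)" using xprime[OF x v0] by (simp add: x'_def)
  define l where "l = - (b * of_nat v0) / c"
  define E0 where "E0 = fps_const (- l / of_nat v0) * fps_shift (v0-1) P"
  define e where "e = jet k E0"
  have xE: "x' * E0 = - (fps_const l * P)"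
  proof (rule fps_ext)
    fix n
    have h0: "x' * E0 = fps_X ^ (v0-1) * (fps_const (of_nat v0) * E0)" by (simp only: xd mult.assoc)
    have "(x' * E0) $ n = (if n < v0 - 1 then 0 else of_nat v0 * ((- l / of_nat v0) * P $ (n - (v0-1) + (v0-1))))"
      unfolding h0 fps_X_power_mult_nth unfolding E0_def fps_mult_left_const_nth fps_shift_nth by (rule refl)
    also have "\<dots> = - l * P $ n"
    proof (cases "n < v0 - 1")
      case True
      then have "P $ n = 0" using zP by (simp add: zb_def)
      then show ?thesis using True by simp
    next
      case False
      then have "n - (v0-1) + (v0-1) = n" by simp
      then show ?thesis using False v0c by simp
    qed
    finally show "(x' * E0) $ n = (- (fps_const l * P)) $ n" by simp
  qed
  have eqA: "jet k (x' * e + pull \<phi> (\<lambda>i j. l * g i j)) = 0"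
  proof (rule fps_ext)
    fix n
    show "jet k (x' * e + pull \<phi> (\<lambda>i j. l * g i j)) $ n = 0 $ n"
    proof (cases "n \<le> k")
      case True
      then have "(x' * e) $ n = (x' * E0) $ n" unfolding e_def by (rule mult_jet_nth)
      then show ?thesis using True xE by (simp add: jet_nth pull_scale P_def)
    qed (simp add: jet_nth)
  qed
  define Q where "Q = y' * E0 + pull \<phi> (\<lambda>i j. (-l) * h i j)"
  have xQ: "x' * Q = - (fps_const l * F)"
  proof -
    have nl: "fps_const (-l) = - fps_const l" by simp
    have "x' * Q = y' * (x' * E0) + x' * (fps_const (-l) * pull \<phi> h)"
      unfolding Q_def pull_scale by (simp only: distrib_left mult.left_commute[of x' y'])
    also have "\<dots> = - (fps_const l * (pull \<phi> h * x' + P * y'))"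
      unfolding xE nl by (simp only: mult_minus_left mult_minus_right distrib_left minus_add_distrib ac_simps)
    also have "\<dots> = - (fps_const l * F)"
      unfolding F_def form_pull_def x'_def y'_def P_def by (rule refl)
    finally show ?thesis .
  qed
  have Qn: "Q $ n = - l / of_nat v0 * F $ (n + (v0-1))" for n
  proof -
    have "(x' * Q) $ (n + (v0-1)) = of_nat v0 * Q $ n"
      by (simp add: xd mult.assoc fps_X_power_mult_nth)
    then have "of_nat v0 * Q $ n = - l * F $ (n + (v0-1))" using xQ by simp
    then show ?thesis using v0c by (simp add: field_simps)
  qed
  have eqB: "jet k (y' * e + pull \<phi> (\<lambda>i j. (-l) * h i j)) = fps_const b * fps_X ^ k"
  proof (rule fps_ext)
    fix n
    show "jet k (y' * e + pull \<phi> (\<lambda>i j. (-l) * h i j)) $ n = (fps_const b * fps_X ^ k) $ n"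
    proof (cases "n \<le> k")
      case True
      then have "(y' * e) $ n = (y' * E0) $ n" unfolding e_def by (rule mult_jet_nth)
      then have 1: "jet k (y' * e + pull \<phi> (\<lambda>i j. (-l) * h i j)) $ n = Q $ n"
        using True by (simp add: jet_nth Q_def)
      show ?thesis
      proof (cases "n = k")
        case True
        have "Q $ n = - l / of_nat v0 * c" using Qn True v0 unfolding c_def d_def by (simp add: add.commute)
        also have "\<dots> = b" using v0c c unfolding l_def by (simp add: field_simps)
        finally show ?thesis using 1 True by simp
      next
        case False
        then have "n + (v0 - 1) < d" using \<open>n \<le> k\<close> unfolding d_def by simp
        then have "Q $ n = 0" using Qn Fl by simp
        then show ?thesis using 1 False by simp
      qed
    qed (simp add: jet_nth)
  qed
  have eM: "e \<in> M1sq"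
  proof -
    have "E0 $ 0 = 0" using zP v0 by (simp add: E0_def zb_def)
    moreover have "E0 $ 1 = 0" using zP v0 by (simp add: E0_def zb_def)
    ultimately show ?thesis unfolding M1sq_def e_def by (auto simp: conv1_jet jet_nth)
  qed
  show ?thesis using eM eqA eqB unfolding x'_def y'_def by blast
qed

lemma core:
  assumes x: "fst \<phi> = fps_X ^ v0" and v0: "v0 \<ge> 1" and y: "zb (v0+1) (snd \<phi>)"
    and b: "b \<noteq> 0"
    and Sscale: "\<And>g a. g \<in> S \<Longrightarrow> (\<lambda>i j. a * g i j) \<in> S"
    and Sz: "\<And>g. g \<in> S \<Longrightarrow> g 0 0 = 0 \<and> g 1 0 = 0"
  shows "(0, fps_const b * fps_X ^ k) \<in> {(jet k (fps_deriv (fst \<phi>) * e + pull \<phi> g), jet k (fps_deriv (snd \<phi>) * e + pull \<phi> h))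
     | e g h. e \<in> M1sq \<and> g \<in> S \<and> h \<in> M2sq}
    \<longleftrightarrow> k + v0 \<in> {vform \<phi> h g | h g. g \<in> S \<and> h \<in> M2sq \<and> form_pull \<phi> h g \<noteq> 0}"
proof
  assume "(0, fps_const b * fps_X ^ k) \<in> {(jet k (fps_deriv (fst \<phi>) * e + pull \<phi> g), jet k (fps_deriv (snd \<phi>) * e + pull \<phi> h))
     | e g h. e \<in> M1sq \<and> g \<in> S \<and> h \<in> M2sq}"
  then obtain e g h where m: "e \<in> M1sq" "g \<in> S" "h \<in> M2sq"
    and e1: "jet k (fps_deriv (fst \<phi>) * e + pull \<phi> g) = 0"
    and e2: "jet k (fps_deriv (snd \<phi>) * e + pull \<phi> h) = fps_const b * fps_X ^ k"
    by auto
  have r: "form_pull \<phi> (\<lambda>i j. (-1) * h i j) g \<noteq> 0 \<and> vform \<phi> (\<lambda>i j. (-1) * h i j) g = k + v0"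
    by (rule fwd[OF x v0 y b e1 e2])
  have "(\<lambda>i j. (-1) * h i j) \<in> M2sq" using m(3) by (rule M2sq_scale)
  then show "k + v0 \<in> {vform \<phi> h g | h g. g \<in> S \<and> h \<in> M2sq \<and> form_pull \<phi> h g \<noteq> 0}"
    using r m(2) by (metis (mono_tags, lifting) mem_Collect_eq)
next
  assume "k + v0 \<in> {vform \<phi> h g | h g. g \<in> S \<and> h \<in> M2sq \<and> form_pull \<phi> h g \<noteq> 0}"
  then obtain h g where m: "g \<in> S" "h \<in> M2sq" "form_pull \<phi> h g \<noteq> 0" "vform \<phi> h g = k + v0"
    by auto
  have gz: "g 0 0 = 0" "g 1 0 = 0" using Sz[OF m(1)] by auto
  obtain l e where r: "e \<in> M1sq" "jet k (fps_deriv (fst \<phi>) * e + pull \<phi> (\<lambda>i j. l * g i j)) = 0"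
     "jet k (fps_deriv (snd \<phi>) * e + pull \<phi> (\<lambda>i j. (-l) * h i j)) = fps_const b * fps_X ^ k"
    using bwd[OF x v0 y gz m(3) m(4), of b] by blast
  have "(\<lambda>i j. l * g i j) \<in> S" using m(1) by (rule Sscale)
  moreover have "(\<lambda>i j. (-l) * h i j) \<in> M2sq" using m(2) by (rule M2sq_scale)
  ultimately show "(0, fps_const b * fps_X ^ k) \<in> {(jet k (fps_deriv (fst \<phi>) * e + pull \<phi> g), jet k (fps_deriv (snd \<phi>) * e + pull \<phi> h))
     | e g h. e \<in> M1sq \<and> g \<in> S \<and> h \<in> M2sq}"
    using r by (metis (mono_tags, lifting) mem_Collect_eq)
qed

lemma sum_delta_c: "(\<Sum>j\<le>(n::nat). if j = 1 then (c::complex) else 0) = (if 1 \<le> n then c else 0)"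
  by (subst sum.delta) auto

lemma indicator_sum:
  "(\<Sum>i\<le>(n::nat). \<Sum>j\<le>n. (if i = 0 \<and> j = 1 then 1 else 0) * f i j) = (if 1 \<le> n then f 0 1 else (0::complex))"
proof -
  have "(\<Sum>j\<le>n. (if i = 0 \<and> j = 1 then 1 else 0) * f i j) = (if i = 0 then (if 1 \<le> n then f 0 1 else 0) else 0)" for i
    by (cases "i = 0") (auto simp: if_distrib[of "\<lambda>x. x * _"] sum_delta_c cong: if_cong)
  then have "(\<Sum>i\<le>n. \<Sum>j\<le>n. (if i = 0 \<and> j = 1 then 1 else 0) * f i j) = (\<Sum>i\<le>n. if i = 0 then (if 1 \<le> n then f 0 1 else 0) else 0)"
    by (intro sum.cong) auto
  then show ?thesis by simp
qed

theorem proposition3p3: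
  fixes G :: "nat set" and \<psi> \<phi> :: param and k :: nat and b :: complex
  assumes "\<psi> \<in> Sigma G"
    and "k > sg_v1 G"
    and "\<phi> = jet_pair k \<psi>"
    and "b \<noteq> 0"
  shows "((0, fps_const b * fps_X ^ k) \<in> T1 k \<phi> \<longleftrightarrow> k + sg_v0 G \<in> Lambda2 \<phi>)
       \<and> ((0, fps_const b * fps_X ^ k) \<in> Ttilde k \<phi> \<longleftrightarrow> k + sg_v0 G \<in> LambdaP \<phi>)"
proof -
  define v0 where "v0 = sg_v0 G"
  define v1 where "v1 = sg_v1 G"
  obtain a where psi: "\<psi> = (fps_X ^ v0,
           fps_X ^ v1 + (\<Sum>i\<in>{v1<..<conductor G}. fps_const (a i) * fps_X ^ i))"
    and nd: "\<not> v0 dvd v1" and sg: "semigroup_of \<psi> = G"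
    using assms(1) unfolding Sigma_def v0_def v1_def by auto
  define y where "y = snd \<psi>"
  have yn: "y $ n = (if n = v1 then 1 else 0)" if "n \<le> v1" for n
  proof -
    have "(\<Sum>i\<in>{v1<..<conductor G}. fps_const (a i) * fps_X ^ i) $ n = 0"
      unfolding fps_sum_nth using that by (intro sum.neutral) auto
    then show ?thesis unfolding y_def psi by simp
  qed
  have v1pos: "v1 \<ge> 1" using nd by (cases v1) auto
  define hY :: series2 where "hY = (\<lambda>i j. if i = 0 \<and> j = 1 then 1 else 0)"
  have pY: "pull \<psi> hY $ n = (if 1 \<le> n then y $ n else 0)" for n
    unfolding pull_def hY_def y_def fps_nth_Abs_fps by (subst indicator_sum) simp
  have cY: "conv2 hY" unfolding conv2_def
    by (rule exI[of _ 1]) (auto simp: hY_def intro!: exI[of _ 1])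
  have pv1: "pull \<psi> hY $ v1 \<noteq> 0" using pY yn v1pos by simp
  have sdY: "subdegree (pull \<psi> hY) = v1"
  proof (rule subdegreeI[OF pv1])
    fix i assume "i < v1" then show "pull \<psi> hY $ i = 0" using pY yn by simp
  qed
  have "pull \<psi> hY \<noteq> 0" using pv1 by auto
  then have v1G: "v1 \<in> G" unfolding sg[symmetric] semigroup_of_def using cY sdY by auto
  have ex: "v1 \<in> G \<and> 0 < v1" using v1G v1pos by simp
  have v0pos: "0 < v0" unfolding v0_def sg_v0_def using LeastI[of "\<lambda>n. n \<in> G \<and> 0 < n", OF ex] by simp
  have "v0 \<le> v1" unfolding v0_def sg_v0_def by (rule Least_le[of "\<lambda>n. n \<in> G \<and> 0 < n", OF ex])
  moreover have "v0 \<noteq> v1" using nd by auto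
  ultimately have v01: "v0 < v1" by simp
  have kv: "v1 < k" using assms(2) v1_def by simp
  have x: "fst \<phi> = fps_X ^ v0"
    using v01 kv unfolding assms(3) jet_pair_def psi by (intro fps_ext) (auto simp: jet_nth)
  have yz: "zb (v0+1) (snd \<phi>)"
    unfolding zb_def
  proof (intro allI impI)
    fix i assume i: "i < v0 + 1"
    then have "y $ i = 0" using yn v01 by simp
    then show "snd \<phi> $ i = 0" unfolding assms(3) jet_pair_def y_def by (simp add: jet_nth)
  qed
  have v0': "v0 \<ge> 1" using v0pos by simp
  have A: "(0, fps_const b * fps_X ^ k) \<in> T1 k \<phi> \<longleftrightarrow> k + v0 \<in> Lambda2 \<phi>"
    unfolding T1_def Lambda2_def
    by (rule core[OF x v0' yz assms(4)]) (auto simp: M2sq_def intro: conv2_scale)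
  have B: "(0, fps_const b * fps_X ^ k) \<in> Ttilde k \<phi> \<longleftrightarrow> k + v0 \<in> LambdaP \<phi>"
    unfolding Ttilde_def LambdaP_def
    by (rule core[OF x v0' yz assms(4)]) (auto simp: IdX2Y_def intro: conv2_scale)
  show ?thesis using A B v0_def by simp
qed

end
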